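(* Let $0<\mu<\lambda_{\min}(A)$ and $\ell\ge1$, and assume that $R_0,\dots,R_{\ell-1}$ (from BCG) have full column rank ($R_\ell$ may be rank deficient, e.g. zero). Define recursively $\Upsilon^{(\mu)}_0=\mu^{-1}I_m$, $\Theta^{(\mu)}_j=(R_j^TR_j)\Upsilon^{(\mu)}_j$, and for $j=1,\dots,\ell$ $$\Upsilon^{(\mu)}_j=\big[\mu(\Theta^{(\mu)}_{j-1}-\Theta_{j-1})+R_j^TR_j\big]^{-1}(\Theta^{(\mu)}_{j-1}-\Theta_{j-1}).$$ Then these quantities are well defined, and for every $k=1,\dots,\ell$, $$\Theta^{(\mu)}_{k-1}-\mathfrak{E}_{k-1}=\sum_{j=k}^{\ell}B^{(\mu)}_j+\big(\Theta^{(\mu)}_\ell-\mathfrak{E}_\ell\big),\qquad B^{(\mu)}_j=(\Theta^{(\mu)}_{j-1}-\Theta_{j-1})-\Theta^{(\mu)}_j,$$ where each $B^{(\mu)}_j$, $j=1,\dots,\ell$, is symmetric positive definite. If moreover $R_\ell=0$, then $\Theta^{(\mu)}_{k-1}-\mathfrak{E}_{k-1}$ is symmetric positive definite for every $k=1,\dots,\ell$.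
   Context: Let $A\in\mathbb{R}^{n\times n}$ be symmetric positive definite, let $B,X_0\in\mathbb{R}^{n\times m}$, and let $X=A^{-1}B$. The block conjugate gradient (BCG) algorithm sets $R_0=B-AX_0$, $P_0=R_0$, and for $k=1,2,\dots$: $\Upsilon_{k-1}=(P_{k-1}^TAP_{k-1})^{-1}(R_{k-1}^TR_{k-1})$, $X_k=X_{k-1}+P_{k-1}\Upsilon_{k-1}$, $R_k=R_{k-1}-AP_{k-1}\Upsilon_{k-1}$, $\Xi_k=(R_{k-1}^TR_{k-1})^{-1}(R_k^TR_k)$, $P_k=R_k+P_{k-1}\Xi_k$. Define $\mathfrak{E}_k=(X-X_k)^TA(X-X_k)$ and $\Theta_k=(R_k^TR_k)\Upsilon_k$. $\lambda_{\min}(A)$ denotes the smallest eigenvalue of $A$. *)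

theory Defs
  imports "HOL-Analysis.Analysis"
begin

definition spd :: "real^'k^'k \<Rightarrow> bool" where
  "spd M \<longleftrightarrow> transpose M = M \<and> (\<forall>x. x \<noteq> 0 \<longrightarrow> x \<bullet> (M *v x) > 0)"

definition lambda_min :: "real^'k^'k \<Rightarrow> real" where
  "lambda_min M = Min {l. \<exists>v. v \<noteq> 0 \<and> M *v v = l *\<^sub>R v}"

fun bcg :: "real^'n^'n \<Rightarrow> real^'m^'n \<Rightarrow> real^'m^'n \<Rightarrow> nat
            \<Rightarrow> (real^'m^'n) \<times> (real^'m^'n) \<times> (real^'m^'n)" where
  "bcg A B X0 0 = (X0, B - A ** X0, B - A ** X0)"
| "bcg A B X0 (Suc k) =
     (let (X, R, P) = bcg A B X0 k;
          Ups = matrix_inv (transpose P ** A ** P) ** (transpose R ** R);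
          X' = X + P ** Ups;
          R' = R - (A ** P) ** Ups;
          Xi = matrix_inv (transpose R ** R) ** (transpose R' ** R');
          P' = R' + P ** Xi
      in (X', R', P'))"

definition bcgX where "bcgX A B X0 k = fst (bcg A B X0 k)"
definition bcgR where "bcgR A B X0 k = fst (snd (bcg A B X0 k))"
definition bcgP where "bcgP A B X0 k = snd (snd (bcg A B X0 k))"

definition bcgUps :: "real^'n^'n \<Rightarrow> real^'m^'n \<Rightarrow> real^'m^'n \<Rightarrow> nat \<Rightarrow> real^'m^'m" where
  "bcgUps A B X0 k = matrix_inv (transpose (bcgP A B X0 k) ** A ** bcgP A B X0 k)
                      ** (transpose (bcgR A B X0 k) ** bcgR A B X0 k)"

definition bcgTheta :: "real^'n^'n \<Rightarrow> real^'m^'n \<Rightarrow> real^'m^'n \<Rightarrow> nat \<Rightarrow> real^'m^'m" where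
  "bcgTheta A B X0 k = (transpose (bcgR A B X0 k) ** bcgR A B X0 k) ** bcgUps A B X0 k"

definition bcgErr :: "real^'n^'n \<Rightarrow> real^'m^'n \<Rightarrow> real^'m^'n \<Rightarrow> nat \<Rightarrow> real^'m^'m" where
  "bcgErr A B X0 k = transpose (matrix_inv A ** B - bcgX A B X0 k) ** A
                       ** (matrix_inv A ** B - bcgX A B X0 k)"

fun UpsMu :: "real \<Rightarrow> real^'n^'n \<Rightarrow> real^'m^'n \<Rightarrow> real^'m^'n \<Rightarrow> nat \<Rightarrow> real^'m^'m" where
  "UpsMu mu A B X0 0 = (inverse mu) *\<^sub>R mat 1"
| "UpsMu mu A B X0 (Suc j) =
     (let D = (transpose (bcgR A B X0 j) ** bcgR A B X0 j) ** UpsMu mu A B X0 j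
              - bcgTheta A B X0 j
      in matrix_inv (mu *\<^sub>R D + transpose (bcgR A B X0 (Suc j)) ** bcgR A B X0 (Suc j)) ** D)"

definition ThetaMu :: "real \<Rightarrow> real^'n^'n \<Rightarrow> real^'m^'n \<Rightarrow> real^'m^'n \<Rightarrow> nat \<Rightarrow> real^'m^'m" where
  "ThetaMu mu A B X0 j = (transpose (bcgR A B X0 j) ** bcgR A B X0 j) ** UpsMu mu A B X0 j"

text \<open>B^(\<mu>)_j = (\<Theta>^(\<mu>)_{j-1} - \<Theta>_{j-1}) - \<Theta>^(\<mu>)_j (used for j \<ge> 1).\<close>
definition BMu :: "real \<Rightarrow> real^'n^'n \<Rightarrow> real^'m^'n \<Rightarrow> real^'m^'n \<Rightarrow> nat \<Rightarrow> real^'m^'m" where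
  "BMu mu A B X0 j = (ThetaMu mu A B X0 (j - 1) - bcgTheta A B X0 (j - 1)) - ThetaMu mu A B X0 j"

end

theory Submission
  imports Defs
begin

lemma mm_add_r: "((A::'a::semiring_1^'n^'m) + B) ** C = A ** C + B ** C"
  by (vector matrix_matrix_mult_def sum.distrib[symmetric] field_simps)
lemma mm_diff_l: "(A::'a::ring_1^'n^'m) ** (B - C) = A ** B - A ** C"
  by (vector matrix_matrix_mult_def sum_subtractf[symmetric] field_simps)
lemma mm_diff_r: "((A::'a::ring_1^'n^'m) - B) ** C = A ** C - B ** C"
  by (vector matrix_matrix_mult_def sum_subtractf[symmetric] field_simps)
lemma mm_neg_l: "(- (A::'a::ring_1^'n^'m)) ** B = - (A ** B)"
  by (vector matrix_matrix_mult_def sum_negf[symmetric])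
lemma mm_neg_r: "(A::'a::ring_1^'n^'m) ** (- B) = - (A ** B)"
  by (vector matrix_matrix_mult_def sum_negf[symmetric])
lemma mm_scale_l: "(c *\<^sub>R (A::real^'n^'m)) ** B = c *\<^sub>R (A ** B)"
  by (simp add: scalar_matrix_assoc)
lemma mm_scale_r: "(A::real^'n^'m) ** (c *\<^sub>R B) = c *\<^sub>R (A ** B)"
  by (simp add: matrix_scalar_ac scalar_matrix_assoc)
lemma tr_add: "transpose ((A::'a::semiring_1^'n^'m) + B) = transpose A + transpose B"
  by (simp add: transpose_def vec_eq_iff)
lemma tr_diff: "transpose ((A::'a::ring_1^'n^'m) - B) = transpose A - transpose B"
  by (simp add: transpose_def vec_eq_iff)
lemma tr_neg: "transpose (- (A::'a::ring_1^'n^'m)) = - transpose A"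
  by (simp add: transpose_def vec_eq_iff)
lemma tr_zero: "transpose (0::'a::semiring_1^'n^'m) = 0"
  by (simp add: transpose_def vec_eq_iff)

lemmas mm_simps = mm_add_r matrix_add_ldistrib mm_diff_l mm_diff_r mm_neg_l mm_neg_r mm_scale_l mm_scale_r
   tr_add tr_diff tr_neg tr_zero transpose_scalar matrix_transpose_mul matrix_mul_assoc[symmetric]


section \<open>Inverses\<close>

lemma inv_r: "invertible (A::'a::semiring_1^'n^'m) \<Longrightarrow> A ** matrix_inv A = mat 1"
  unfolding invertible_def matrix_inv_def by (rule someI2_ex) auto
lemma inv_l: "invertible (A::'a::semiring_1^'n^'m) \<Longrightarrow> matrix_inv A ** A = mat 1"
  unfolding invertible_def matrix_inv_def by (rule someI2_ex) auto
lemma inv_r': "invertible (A::'a::semiring_1^'n^'m) \<Longrightarrow> A ** (matrix_inv A ** B) = B"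
  by (simp add: matrix_mul_assoc inv_r)
lemma inv_l': "invertible (A::'a::semiring_1^'n^'m) \<Longrightarrow> matrix_inv A ** (A ** B) = B"
  by (simp add: matrix_mul_assoc inv_l)
lemma inv_unique: "(A::real^'n^'n) ** B = mat 1 \<Longrightarrow> matrix_inv A = B"
proof -
  assume h: "A ** B = mat 1"
  hence h2: "B ** A = mat 1" using matrix_left_right_inverse by blast
  hence iA: "invertible A" using h invertible_def by blast
  have "matrix_inv A = matrix_inv A ** (A ** B)" by (simp add: h)
  also have "\<dots> = B" by (simp add: inv_l' iA)
  finally show ?thesis .
qed
lemma invertible_inv: "invertible (A::real^'n^'n) \<Longrightarrow> invertible (matrix_inv A)"
  using inv_l inv_r invertible_def by blast
lemma inv_inv: "invertible (A::real^'n^'n) \<Longrightarrow> matrix_inv (matrix_inv A) = A"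
  by (rule inv_unique) (rule inv_l)
lemma inv_tr: "invertible (A::real^'n^'n) \<Longrightarrow> matrix_inv (transpose A) = transpose (matrix_inv A)"
  by (rule inv_unique) (metis inv_l matrix_transpose_mul transpose_mat)
lemma inv_mult: "invertible (A::real^'n^'n) \<Longrightarrow> invertible (B::real^'n^'n) \<Longrightarrow> matrix_inv (A ** B) = matrix_inv B ** matrix_inv A"
  by (rule inv_unique) (simp add: mm_simps inv_r' inv_r)
lemma invertible_rinv: "(A::real^'n^'n) ** B = mat 1 \<Longrightarrow> invertible A"
  using matrix_left_right_inverse invertible_def by blast

section \<open>Positive definiteness\<close>

definition psd :: "real^'k^'k \<Rightarrow> bool" where
  "psd M \<longleftrightarrow> transpose M = M \<and> (\<forall>x. x \<bullet> (M *v x) \<ge> 0)"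

lemma dot_tr: "(x::real^'n) \<bullet> (transpose Q *v y) = (Q *v x) \<bullet> y"
  by (metis dot_lmul_matrix inner_commute transpose_matrix_vector)
lemma dot_tr2: "(x::real^'n) \<bullet> (y v* Q) = (Q *v x) \<bullet> y"
  by (metis dot_lmul_matrix inner_commute)

lemma spd_sym: "spd M \<Longrightarrow> transpose M = M" by (simp add: spd_def)

lemma spd_inj: "spd M \<Longrightarrow> M *v x = 0 \<Longrightarrow> x = 0"
  unfolding spd_def by (metis inner_zero_right less_irrefl)

lemma spd_invertible: "spd (M::real^'k^'k) \<Longrightarrow> invertible M"
  by (metis invertible_left_inverse matrix_left_invertible_ker spd_inj)

lemma spd_inv: assumes "spd (M::real^'k^'k)" shows "spd (matrix_inv M)"
proof -
  have iM: "invertible M" using assms spd_invertible by blast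
  have "transpose (matrix_inv M) = matrix_inv M"
    using inv_tr[OF iM] spd_sym[OF assms] by simp
  moreover have "x \<bullet> (matrix_inv M *v x) > 0" if "x \<noteq> 0" for x
  proof -
    define y where "y = matrix_inv M *v x"
    have xy: "x = M *v y" unfolding y_def by (simp add: matrix_vector_mul_assoc inv_r iM)
    have "y \<noteq> 0" using xy that by auto
    hence "y \<bullet> (M *v y) > 0" using assms spd_def by blast
    thus ?thesis by (simp add: xy matrix_vector_mul_assoc inv_l iM inner_commute)
  qed
  ultimately show ?thesis by (simp add: spd_def)
qed

lemma spd_congr:
  assumes "spd (S::real^'a^'a)" and "\<And>x. (Q::real^'b^'a) *v x = 0 \<Longrightarrow> x = 0"
  shows "spd (transpose Q ** S ** Q)"
  unfolding spd_def
proof (intro conjI allI impI)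
  show "transpose (transpose Q ** S ** Q) = transpose Q ** S ** Q"
    using spd_sym[OF assms(1)] by (simp add: matrix_transpose_mul matrix_mul_assoc)
  fix x :: "real^'b" assume "x \<noteq> 0"
  hence "Q *v x \<noteq> 0" using assms(2) by blast
  hence "(Q *v x) \<bullet> (S *v (Q *v x)) > 0" using assms(1) spd_def by blast
  thus "x \<bullet> ((transpose Q ** S ** Q) *v x) > 0"
    by (simp add: matrix_vector_mul_assoc[symmetric] dot_tr2)
qed

lemma psd_congr:
  assumes "psd (S::real^'a^'a)"
  shows "psd (transpose (Q::real^'b^'a) ** S ** Q)"
  unfolding psd_def
proof (intro conjI allI)
  show "transpose (transpose Q ** S ** Q) = transpose Q ** S ** Q"
    using assms by (simp add: psd_def matrix_transpose_mul matrix_mul_assoc)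
  fix x :: "real^'b"
  have "(Q *v x) \<bullet> (S *v (Q *v x)) \<ge> 0" using assms psd_def by blast
  thus "x \<bullet> ((transpose Q ** S ** Q) *v x) \<ge> 0"
    by (simp add: matrix_vector_mul_assoc[symmetric] dot_tr2)
qed

lemma spd_I: "spd (mat 1 :: real^'k^'k)"
  by (simp add: spd_def)

lemma psd_gram: "psd (transpose (R::real^'b^'a) ** R)"
proof -
  have "psd (mat 1 :: real^'a^'a)" by (simp add: psd_def)
  from psd_congr[OF this, of R] show ?thesis by simp
qed

lemma spd_gram: "(\<And>x. (R::real^'b^'a) *v x = 0 \<Longrightarrow> x = 0) \<Longrightarrow> spd (transpose R ** R)"
  using spd_congr[OF spd_I, of R] by simp

lemma spd_add_psd: "spd S \<Longrightarrow> psd T \<Longrightarrow> spd (S + T)"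
  unfolding spd_def psd_def
  by (simp add: tr_add matrix_vector_mult_add_rdistrib inner_add_right add_pos_nonneg)

lemma spd_add: "spd S \<Longrightarrow> spd T \<Longrightarrow> spd (S + T)"
  unfolding spd_def
  by (simp add: tr_add matrix_vector_mult_add_rdistrib inner_add_right add_pos_pos)

lemma spd_scale: "spd S \<Longrightarrow> (c::real) > 0 \<Longrightarrow> spd (c *\<^sub>R S)"
  unfolding spd_def
  by (simp add: transpose_scalar scaleR_matrix_vector_assoc[symmetric])

lemma spd_psd: "spd S \<Longrightarrow> psd S"
  unfolding spd_def psd_def by (metis inner_zero_left less_eq_real_def)

lemma invertible_inj: "invertible (Q::real^'k^'k) \<Longrightarrow> Q *v x = 0 \<Longrightarrow> x = 0"
  by (metis inj_matrix_vector_mult matrix_vector_mult_0_right injD)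

lemma spd_inv_sym: "spd X \<Longrightarrow> transpose (matrix_inv X) = matrix_inv X"
  using spd_inv spd_sym by blast

lemma radau:
  fixes Y N :: "real^'m^'m"
  assumes Y: "spd Y" and N: "spd N"
  shows "matrix_inv (Y + Y ** matrix_inv N ** Y) = matrix_inv Y - matrix_inv (Y + N)"
    and "spd (matrix_inv Y - matrix_inv (Y + N))"
    and "spd (Y + Y ** matrix_inv N ** Y)"
proof -
  have iY: "invertible Y" and iN: "invertible N" and iM: "invertible (Y + N)"
    using Y N spd_invertible spd_add by blast+
  have eq: "Y + Y ** matrix_inv N ** Y = (Y + N) ** (matrix_inv N ** Y)"
    by (simp add: mm_simps inv_r' iN)
  have "(matrix_inv Y - matrix_inv (Y + N)) ** (Y + Y ** matrix_inv N ** Y) = mat 1"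
  proof -
    have "(matrix_inv Y - matrix_inv (Y + N)) ** (Y + Y ** matrix_inv N ** Y)
       = matrix_inv Y ** (Y + Y ** matrix_inv N ** Y) - matrix_inv (Y + N) ** ((Y + N) ** (matrix_inv N ** Y))"
      by (simp add: mm_diff_r eq)
    also have "\<dots> = mat 1 + matrix_inv N ** Y - matrix_inv N ** Y"
      by (simp only: inv_l'[OF iM]) (simp add: mm_simps inv_l' inv_l iY)
    finally show ?thesis by simp
  qed
  hence "matrix_inv (matrix_inv Y - matrix_inv (Y + N)) = Y + Y ** matrix_inv N ** Y"
    by (rule inv_unique)
  moreover have "invertible (matrix_inv Y - matrix_inv (Y + N))"
    using \<open>_ = mat 1\<close> invertible_rinv by blast
  ultimately show 1: "matrix_inv (Y + Y ** matrix_inv N ** Y) = matrix_inv Y - matrix_inv (Y + N)"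
    by (metis inv_inv)
  have "spd (Y + transpose Y ** matrix_inv N ** Y)"
    by (rule spd_add_psd[OF Y spd_psd[OF spd_congr[OF spd_inv[OF N]]]]) (simp add: spd_inj[OF Y])
  thus "spd (Y + Y ** matrix_inv N ** Y)" using spd_sym[OF Y] by simp
  hence "spd (Y + Y ** matrix_inv N ** Y)" .
  from spd_inv[OF this] show "spd (matrix_inv Y - matrix_inv (Y + N))" by (simp add: 1)
qed

lemma bcg0: "bcgX A B X0 0 = X0" "bcgR A B X0 0 = B - A ** X0" "bcgP A B X0 0 = B - A ** X0"
  by (simp_all add: bcgX_def bcgR_def bcgP_def)

lemma bcgSuc:
  "bcgX A B X0 (Suc k) = bcgX A B X0 k + bcgP A B X0 k ** bcgUps A B X0 k"
  "bcgR A B X0 (Suc k) = bcgR A B X0 k - (A ** bcgP A B X0 k) ** bcgUps A B X0 k"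
  "bcgP A B X0 (Suc k) = bcgR A B X0 (Suc k) + bcgP A B X0 k **
      (matrix_inv (transpose (bcgR A B X0 k) ** bcgR A B X0 k) ** (transpose (bcgR A B X0 (Suc k)) ** bcgR A B X0 (Suc k)))"
  by (cases "bcg A B X0 k"; simp add: bcgX_def bcgR_def bcgP_def bcgUps_def Let_def)+

lemma UpsMuSuc: "UpsMu mu A B X0 (Suc j) =
   matrix_inv (mu *\<^sub>R (ThetaMu mu A B X0 j - bcgTheta A B X0 j) + transpose (bcgR A B X0 (Suc j)) ** bcgR A B X0 (Suc j))
     ** (ThetaMu mu A B X0 j - bcgTheta A B X0 j)"
  by (simp add: ThetaMu_def Let_def)

locale bcgloc =
  fixes A :: "real^'n^'n" and B X0 :: "real^'m^'n" and l :: nat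
  assumes A: "spd A" and fr: "\<And>k x. k < l \<Longrightarrow> bcgR A B X0 k *v x = 0 \<Longrightarrow> x = 0"
begin

abbreviation R where "R k \<equiv> bcgR A B X0 k"
abbreviation P where "P k \<equiv> bcgP A B X0 k"
definition G where "G k = transpose (R k) ** R k"
definition M where "M k = transpose (P k) ** A ** P k"

lemma A_sym[simp]: "transpose A = A" using A spd_sym by blast

lemma G_spd: "k < l \<Longrightarrow> spd (G k)" unfolding G_def using fr spd_gram by blast
lemma G_psd: "psd (G k)" unfolding G_def by (rule psd_gram)
lemma G_sym[simp]: "transpose (G k) = G k" by (simp add: G_def matrix_transpose_mul)
lemma M_sym[simp]: "transpose (M k) = M k" by (simp add: M_def matrix_transpose_mul matrix_mul_assoc)
lemma G_inv_sym: "k < l \<Longrightarrow> transpose (matrix_inv (G k)) = matrix_inv (G k)"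
  using G_spd spd_inv_sym by blast
lemma RsucE: "R (Suc k) = R k - A ** (P k ** (matrix_inv (M k) ** G k))"
  by (simp add: bcgSuc bcgUps_def G_def M_def matrix_mul_assoc)
lemma PsucE: "P (Suc k) = R (Suc k) + P k ** (matrix_inv (G k) ** G (Suc k))"
  by (simp add: bcgSuc G_def)

definition inv_at where "inv_at k \<longleftrightarrow> (\<forall>i<k. transpose (P i) ** R k = 0) \<and> (\<forall>i<k. transpose (R i) ** R k = 0)
   \<and> (\<forall>i<k. transpose (P i) ** A ** P k = 0) \<and> transpose (P k) ** R k = G k"

lemma M_spd: assumes "k < l" "transpose (P k) ** R k = G k" shows "spd (M k)"
proof -
  have "P k *v x = 0 \<Longrightarrow> x = 0" for x
  proof -
    assume h: "P k *v x = 0"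
    have "transpose (transpose (P k) ** R k) = G k" using assms(2) G_sym by metis
    hence "G k = transpose (R k) ** P k" by (simp add: matrix_transpose_mul)
    hence "G k *v x = transpose (R k) *v (P k *v x)" by (simp add: matrix_vector_mul_assoc)
    hence "G k *v x = 0" by (simp add: h)
    thus "x = 0" using spd_inj G_spd assms(1) by blast
  qed
  thus ?thesis unfolding M_def using spd_congr[OF A] by blast
qed

lemma AP_eq: assumes "k < l" "spd (M k)"
  shows "A ** P k = (R k - R (Suc k)) ** (matrix_inv (G k) ** M k)"
proof -
  have iM: "invertible (M k)" and iG: "invertible (G k)" using assms G_spd spd_invertible by blast+
  have "R k - R (Suc k) = A ** P k ** (matrix_inv (M k) ** G k)"
    by (simp add: RsucE matrix_mul_assoc)
  hence "(R k - R (Suc k)) ** (matrix_inv (G k) ** M k) = A ** P k ** (matrix_inv (M k) ** (G k ** (matrix_inv (G k) ** M k)))"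
    by (simp add: matrix_mul_assoc)
  also have "\<dots> = A ** P k" by (simp add: inv_r' iG inv_l iM matrix_mul_assoc[symmetric] inv_l')
  finally show ?thesis by simp
qed


lemma inv_step:
  assumes k: "Suc k \<le> l" and IH: "\<forall>j\<le>k. inv_at j"
  shows "inv_at (Suc k)"
proof -
  have Mspd: "spd (M i)" if "i \<le> k" for i
    using M_spd IH that k unfolding inv_at_def by auto
  have iM: "invertible (M i)" if "i \<le> k" for i using Mspd that spd_invertible by blast
  have iG: "invertible (G i)" if "i \<le> k" for i
  proof -
    have "i < l" using that k by simp
    thus ?thesis using G_spd spd_invertible by blast
  qed
  have Minv_sym: "transpose (matrix_inv (M k)) = matrix_inv (M k)" using Mspd spd_inv_sym by blast
  have Ginv_sym: "transpose (matrix_inv (G i)) = matrix_inv (G i)" if "i \<le> k" for i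
    using G_inv_sym that k by simp
  have ik: "inv_at k" using IH by simp
  have PR: "transpose (P k) ** R k = G k" using ik inv_at_def by blast
  have PAP: "transpose (P i) ** (A ** P k) = 0" if "i < k" for i
    using ik that unfolding inv_at_def by (simp add: matrix_mul_assoc)
  have PAPX: "transpose (P i) ** (A ** (P k ** X)) = 0" if "i < k" for i X
    by (simp add: matrix_mul_assoc PAP[OF that, unfolded matrix_mul_assoc])
  have PRk: "transpose (P i) ** R k = 0" if "i < k" for i using ik that inv_at_def by blast
  have RRk: "transpose (R i) ** R k = 0" if "i < k" for i using ik that inv_at_def by blast
  define U where "U = matrix_inv (M k) ** G k"
  have RS: "R (Suc k) = R k - A ** (P k ** U)" by (simp add: RsucE U_def)
  have i1: "transpose (P i) ** R (Suc k) = 0" if "i \<le> k" for i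
  proof (cases "i = k")
    case True
    have "transpose (P k) ** R (Suc k) = G k - M k ** U"
      by (simp add: RS mm_simps PR M_def)
    also have "\<dots> = 0" by (simp add: U_def inv_r' iM)
    finally show ?thesis using True by simp
  next
    case False
    hence "i < k" using that by simp
    thus ?thesis by (simp add: RS mm_simps PRk PAPX)
  qed
  have i2: "transpose (R i) ** R (Suc k) = 0" if "i \<le> k" for i
  proof (cases i)
    case 0
    have "P 0 = R 0" by (simp add: bcg0)
    thus ?thesis using i1[of 0] 0 by simp
  next
    case (Suc i')
    have "R i = P i - P i' ** (matrix_inv (G i') ** G i)" using PsucE[of i'] Suc by simp
    hence "transpose (R i) ** R (Suc k) = transpose (P i) ** R (Suc k)
       - transpose (matrix_inv (G i') ** G i) ** (transpose (P i') ** R (Suc k))"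
      by (simp add: mm_simps)
    thus ?thesis using i1[of i] i1[of i'] that Suc by simp
  qed
  have i3: "transpose (P i) ** A ** P (Suc k) = 0" if "i \<le> k" for i
  proof -
    have APi: "A ** P i = (R i - R (Suc i)) ** (matrix_inv (G i) ** M i)"
      using AP_eq[of i] Mspd[of i] that k by simp
    have PA: "transpose (P i) ** (A ** X) = M i ** (matrix_inv (G i) ** (transpose (R i) ** X - transpose (R (Suc i)) ** X))" for X
    proof -
      have "transpose (P i) ** (A ** X) = transpose (A ** P i) ** X" by (simp add: matrix_transpose_mul matrix_mul_assoc)
      also have "\<dots> = M i ** (matrix_inv (G i) ** (transpose (R i) ** X - transpose (R (Suc i)) ** X))"
        using Ginv_sym[OF that] by (simp add: APi matrix_transpose_mul tr_diff matrix_mul_assoc mm_diff_l mm_diff_r)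
      finally show ?thesis .
    qed
    have "transpose (P i) ** A ** P (Suc k) = transpose (P i) ** A ** R (Suc k)
         + transpose (P i) ** A ** P k ** (matrix_inv (G k) ** G (Suc k))"
      by (simp add: PsucE matrix_add_ldistrib matrix_mul_assoc)
    also have "\<dots> = 0"
    proof (cases "i = k")
      case True
      have "transpose (P k) ** A ** R (Suc k) = - (M k ** (matrix_inv (G k) ** G (Suc k)))"
        using PA[of "R (Suc k)"] i2[of k] True by (simp add: matrix_mul_assoc G_def[of "Suc k", symmetric] mm_neg_r)
      thus ?thesis using True by (simp add: M_def matrix_mul_assoc)
    next
      case False
      hence "i < k" using that by simp
      hence "transpose (P i) ** A ** R (Suc k) = 0"
        using i2[of i] i2[of "Suc i"] PA[of "R (Suc k)"] \<open>i < k\<close> by (simp add: matrix_mul_assoc)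
      thus ?thesis using PAP[OF \<open>i < k\<close>] by (simp add: matrix_mul_assoc)
    qed
    finally show ?thesis .
  qed
  have i4: "transpose (P (Suc k)) ** R (Suc k) = G (Suc k)"
    using i1[of k] by (simp add: PsucE mm_simps G_def)
  show ?thesis unfolding inv_at_def using i1 i2 i3 i4 by (auto simp: less_Suc_eq_le)
qed

lemma inv_all: "k \<le> l \<Longrightarrow> inv_at k"
proof -
  have "k \<le> l \<Longrightarrow> \<forall>j\<le>k. inv_at j"
  proof (induction k)
    case 0 thus ?case by (simp add: inv_at_def bcg0 G_def)
  next
    case (Suc k) thus ?case using inv_step by (metis Suc_leD le_Suc_eq)
  qed
  thus "k \<le> l \<Longrightarrow> inv_at k" by simp
qed


lemma orthR: "i \<le> l \<Longrightarrow> j \<le> l \<Longrightarrow> i \<noteq> j \<Longrightarrow> transpose (R i) ** R j = 0"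
proof -
  assume h: "i \<le> l" "j \<le> l" "i \<noteq> j"
  show ?thesis
  proof (cases "i < j")
    case True thus ?thesis using inv_all[OF h(2)] inv_at_def by blast
  next
    case False
    hence "j < i" using h by simp
    hence "transpose (R j) ** R i = 0" using inv_all[OF h(1)] inv_at_def by blast
    hence "transpose (transpose (R j) ** R i) = 0" by (simp add: tr_zero)
    thus ?thesis by (simp add: matrix_transpose_mul)
  qed
qed

lemma orthRX: "i \<le> l \<Longrightarrow> j \<le> l \<Longrightarrow> i \<noteq> j \<Longrightarrow> transpose (R i) ** (R j ** X) = 0"
  by (simp add: matrix_mul_assoc orthR)

lemma PR: "k \<le> l \<Longrightarrow> transpose (P k) ** R k = G k"
  using inv_all inv_at_def by blast

lemma RP: "k \<le> l \<Longrightarrow> transpose (R k) ** P k = G k"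
  using PR by (metis G_sym matrix_transpose_mul transpose_transpose)

lemma Mspd: "k < l \<Longrightarrow> spd (M k)"
  using M_spd PR by simp

lemma iM: "k < l \<Longrightarrow> invertible (M k)" using Mspd spd_invertible by blast
lemma iG: "k < l \<Longrightarrow> invertible (G k)" using G_spd spd_invertible by blast
lemma M_inv_sym: "k < l \<Longrightarrow> transpose (matrix_inv (M k)) = matrix_inv (M k)"
  using Mspd spd_inv_sym by blast

lemma AP: "k < l \<Longrightarrow> A ** P k = (R k - R (Suc k)) ** (matrix_inv (G k) ** M k)"
  using AP_eq Mspd by blast

lemma AR0: "0 < l \<Longrightarrow> A ** R 0 = (R 0 - R (Suc 0)) ** (matrix_inv (G 0) ** M 0)"
  using AP[of 0] by (simp add: bcg0)

lemma ARS: "Suc i < l \<Longrightarrow> A ** R (Suc i) = (R (Suc i) - R (Suc (Suc i))) ** (matrix_inv (G (Suc i)) ** M (Suc i))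
    - (R i - R (Suc i)) ** (matrix_inv (G i) ** (M i ** (matrix_inv (G i) ** G (Suc i))))"
proof -
  assume h: "Suc i < l"
  have "R (Suc i) = P (Suc i) - P i ** (matrix_inv (G i) ** G (Suc i))" using PsucE[of i] by simp
  hence "A ** R (Suc i) = A ** P (Suc i) - A ** P i ** (matrix_inv (G i) ** G (Suc i))"
    by (simp add: mm_diff_l matrix_mul_assoc)
  thus ?thesis using AP[OF h] AP[of i] h by (simp add: matrix_mul_assoc)
qed


lemma GX: "transpose (R a) ** (R a ** X) = G a ** X"
  by (simp add: G_def matrix_mul_assoc)

lemma T3: assumes "a < l" "b \<le> l" "a + 2 \<le> b" shows "transpose (R b) ** (A ** R a) = 0"
proof (cases a)
  case 0
  thus ?thesis using assms AR0 by (simp add: mm_simps orthRX)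
next
  case (Suc i)
  thus ?thesis using assms ARS[of i] by (simp add: mm_simps orthRX)
qed

lemma T3t: assumes "a < l" "b \<le> l" "a + 2 \<le> b" shows "transpose (R a) ** (A ** R b) = 0"
proof -
  have "transpose (transpose (R b) ** (A ** R a)) = 0" using T3[OF assms] by (simp add: tr_zero)
  thus ?thesis by (simp add: matrix_transpose_mul matrix_mul_assoc)
qed

lemma T1: assumes "j < l" shows "transpose (R (Suc j)) ** (A ** R j) = - (G (Suc j) ** (matrix_inv (G j) ** M j))"
proof (cases j)
  case 0
  thus ?thesis using assms AR0 by (simp add: mm_simps orthRX GX)
next
  case (Suc i)
  thus ?thesis using assms ARS[of i] by (simp add: mm_simps orthRX GX)
qed

lemma T1t: assumes "j < l" shows "transpose (R j) ** (A ** R (Suc j)) = - (M j ** (matrix_inv (G j) ** G (Suc j)))"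
proof -
  have "transpose (transpose (R (Suc j)) ** (A ** R j)) = transpose (- (G (Suc j) ** (matrix_inv (G j) ** M j)))"
    using T1[OF assms] by simp
  thus ?thesis using G_inv_sym[OF assms] by (simp add: matrix_transpose_mul matrix_mul_assoc tr_neg)
qed

lemma T2: assumes "Suc j < l" shows "transpose (R (Suc j)) ** (A ** R (Suc j))
   = M (Suc j) + G (Suc j) ** (matrix_inv (G j) ** (M j ** (matrix_inv (G j) ** G (Suc j))))"
  using assms ARS[of j] iG[of "Suc j"] by (simp add: mm_simps orthRX GX inv_r')


lemma iA: "invertible A" using A spd_invertible by blast
lemma Ainv_sym[simp]: "transpose (matrix_inv A) = matrix_inv A" using A spd_inv_sym by blast

lemma RX: "R k = B - A ** bcgX A B X0 k"
  by (induction k) (simp_all add: bcg0 bcgSuc matrix_add_ldistrib matrix_mul_assoc)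

lemma Err_eq: "bcgErr A B X0 k = transpose (R k) ** (matrix_inv A ** R k)"
proof -
  have "matrix_inv A ** B - bcgX A B X0 k = matrix_inv A ** R k"
    by (simp add: RX mm_diff_l inv_l' iA)
  thus ?thesis unfolding bcgErr_def by (simp add: matrix_transpose_mul matrix_mul_assoc[symmetric] inv_r' iA)
qed

lemma Theta_eq: "bcgTheta A B X0 k = G k ** (matrix_inv (M k) ** G k)"
  by (simp add: bcgTheta_def bcgUps_def G_def M_def)

lemma Err_step: assumes "k < l" shows "bcgErr A B X0 k = bcgTheta A B X0 k + bcgErr A B X0 (Suc k)"
proof -
  define U where "U = matrix_inv (M k) ** G k"
  have RS: "R (Suc k) = R k - A ** (P k ** U)" by (simp add: RsucE U_def)
  have RPX: "transpose (R k) ** (P k ** X) = G k ** X" for X using RP assms by (simp add: matrix_mul_assoc)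
  have PRX: "transpose (P k) ** (R k ** X) = G k ** X" for X using PR assms by (simp add: matrix_mul_assoc)
  have PAPX: "transpose (P k) ** (A ** (P k ** X)) = M k ** X" for X by (simp add: M_def matrix_mul_assoc)
  have UT: "transpose U = G k ** matrix_inv (M k)" using M_inv_sym[OF assms] by (simp add: U_def matrix_transpose_mul)
  have "bcgErr A B X0 (Suc k) = bcgErr A B X0 k - G k ** U - transpose U ** G k + transpose U ** (M k ** U)"
    unfolding Err_eq RS
    using PR[of k] RP[of k] assms by (simp add: mm_simps inv_l' inv_r' iA RPX PRX PAPX)
  also have "\<dots> = bcgErr A B X0 k - G k ** U"
    by (simp add: UT U_def matrix_mul_assoc[symmetric] inv_r' iM assms)
  finally show ?thesis by (simp add: Theta_eq U_def)
qed

end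

fun zseq :: "real^'n^'n \<Rightarrow> real^'m^'n \<Rightarrow> real^'m^'n \<Rightarrow> real \<Rightarrow> nat \<Rightarrow> real^'m^'n" where
  "zseq A B X0 mu 0 = bcgR A B X0 0"
| "zseq A B X0 mu (Suc j) = bcgR A B X0 (Suc j) - zseq A B X0 mu j **
     (matrix_inv (transpose (zseq A B X0 mu j) ** (A - mu *\<^sub>R mat 1) ** zseq A B X0 mu j)
       ** (transpose (zseq A B X0 mu j) ** ((A - mu *\<^sub>R mat 1) ** bcgR A B X0 (Suc j))))"

declare zseq.simps(2)[simp del]

locale bcgmu = bcgloc A B X0 l for A :: "real^'n^'n" and B X0 :: "real^'m^'n" and l :: nat +
  fixes mu :: real
  assumes mu_pos: "0 < mu" and C_spd': "spd (A - mu *\<^sub>R mat 1)"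
begin

definition C where "C = A - mu *\<^sub>R mat 1"
abbreviation Z where "Z j \<equiv> zseq A B X0 mu j"
definition N where "N j = transpose (Z j) ** C ** Z j"

lemma C_spd: "spd C" using C_spd' C_def by simp
lemma C_sym[simp]: "transpose C = C" using C_spd spd_sym by blast
lemma N_sym[simp]: "transpose (N j) = N j" by (simp add: N_def matrix_transpose_mul matrix_mul_assoc)

lemma Z0: "Z 0 = R 0" by simp
lemma ZS: "Z (Suc j) = R (Suc j) - Z j ** (matrix_inv (N j) ** (transpose (Z j) ** (C ** R (Suc j))))"
  unfolding N_def C_def by (simp only: zseq.simps)

lemma CX: "transpose (R a) ** (C ** X) = transpose (R a) ** (A ** X) - mu *\<^sub>R (transpose (R a) ** X)"
  by (simp add: C_def mm_simps)

definition zinv where "zinv j \<longleftrightarrow> (\<forall>i. j < i \<and> i \<le> l \<longrightarrow> transpose (R i) ** Z j = 0)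
  \<and> transpose (R j) ** Z j = G j
  \<and> (\<forall>i. j + 2 \<le> i \<and> i \<le> l \<longrightarrow> transpose (Z j) ** (C ** R i) = 0)
  \<and> (Suc j \<le> l \<longrightarrow> transpose (Z j) ** (C ** R (Suc j)) = transpose (R j) ** (C ** R (Suc j)))"

lemma N_spd: assumes "j < l" "zinv j" shows "spd (N j)"
proof -
  have "Z j *v x = 0 \<Longrightarrow> x = 0" for x
  proof -
    assume h: "Z j *v x = 0"
    have "G j *v x = transpose (R j) *v (Z j *v x)"
      using assms(2) unfolding zinv_def by (simp add: matrix_vector_mul_assoc)
    hence "G j *v x = 0" using h by simp
    thus "x = 0" using spd_inj G_spd assms(1) by blast
  qed
  thus ?thesis unfolding N_def using spd_congr[OF C_spd] by blast
qed

lemma zinv0: "0 < l \<Longrightarrow> zinv 0"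
  unfolding zinv_def using orthR
  by (auto simp: G_def matrix_transpose_mul matrix_mul_assoc[symmetric] CX mm_simps T3t orthRX)

lemma zinv_step: assumes "Suc j < l" "zinv j" shows "zinv (Suc j)"
proof -
  define K where "K = matrix_inv (N j) ** (transpose (Z j) ** (C ** R (Suc j)))"
  have ZSK: "Z (Suc j) = R (Suc j) - Z j ** K" by (simp add: ZS K_def)
  have z1: "transpose (R i) ** Z j = 0" if "j < i" "i \<le> l" for i using assms(2) that zinv_def by blast
  have z1X: "transpose (R i) ** (Z j ** X) = 0" if "j < i" "i \<le> l" for i X
    using z1[OF that] by (simp add: matrix_mul_assoc)
  have z3: "transpose (Z j) ** (C ** R i) = 0" if "j + 2 \<le> i" "i \<le> l" for i using assms(2) that zinv_def by blast
  have a1: "\<forall>i. Suc j < i \<and> i \<le> l \<longrightarrow> transpose (R i) ** Z (Suc j) = 0"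
    using assms by (auto simp: ZSK mm_diff_l orthR z1X)
  have a2: "transpose (R (Suc j)) ** Z (Suc j) = G (Suc j)"
    using assms by (simp add: ZSK mm_diff_l z1X G_def)
  have a3: "\<forall>i. Suc j + 2 \<le> i \<and> i \<le> l \<longrightarrow> transpose (Z (Suc j)) ** (C ** R i) = 0"
    using assms by (auto simp: ZSK tr_diff matrix_transpose_mul mm_diff_r matrix_mul_assoc[symmetric] z3 CX T3t orthRX orthR)
  have a4: "Suc (Suc j) \<le> l \<longrightarrow> transpose (Z (Suc j)) ** (C ** R (Suc (Suc j))) = transpose (R (Suc j)) ** (C ** R (Suc (Suc j)))"
    using assms by (auto simp: ZSK tr_diff matrix_transpose_mul mm_diff_r matrix_mul_assoc[symmetric] z3)
  show ?thesis unfolding zinv_def using a1 a2 a3 a4 by simp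
qed

lemma zinv_all: "j < l \<Longrightarrow> zinv j"
  by (induction j) (auto simp: zinv0 zinv_step)


lemma N_Suc: assumes "Suc j < l"
  shows "N (Suc j) = M (Suc j) + G (Suc j) ** (matrix_inv (G j) ** (M j ** (matrix_inv (G j) ** G (Suc j))))
     - mu *\<^sub>R G (Suc j) - G (Suc j) ** (matrix_inv (G j) ** (M j ** (matrix_inv (N j) ** (M j ** (matrix_inv (G j) ** G (Suc j))))))"
proof -
  have zj: "zinv j" using zinv_all assms by simp
  define b where "b = transpose (Z j) ** (C ** R (Suc j))"
  define K where "K = matrix_inv (N j) ** b"
  have jl: "j < l" using assms by simp
  have iN: "invertible (N j)" by (rule spd_invertible[OF N_spd[OF jl zj]])
  have Ninv_sym: "transpose (matrix_inv (N j)) = matrix_inv (N j)" by (rule spd_inv_sym[OF N_spd[OF jl zj]])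
  have ZSK: "Z (Suc j) = R (Suc j) - Z j ** K" by (simp only: ZS K_def b_def)
  have bt: "transpose b = transpose (R (Suc j)) ** (C ** Z j)"
    by (simp add: b_def matrix_transpose_mul matrix_mul_assoc)
  have btX: "transpose (R (Suc j)) ** (C ** (Z j ** X)) = transpose b ** X" for X :: "real^'m^'m"
    by (simp add: bt matrix_mul_assoc)
  have ZCZ: "transpose (Z j) ** (C ** (Z j ** X)) = N j ** X" for X :: "real^'m^'m"
    by (simp add: N_def matrix_mul_assoc)
  have "N (Suc j) = transpose (R (Suc j)) ** (C ** R (Suc j)) - transpose b ** K - transpose K ** b
       + transpose K ** (N j ** K)"
    unfolding N_def ZSK
    by (simp add: mm_simps ZCZ btX b_def[symmetric])
  also have "\<dots> = transpose (R (Suc j)) ** (C ** R (Suc j)) - transpose b ** (matrix_inv (N j) ** b)"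
    by (simp add: K_def matrix_transpose_mul Ninv_sym inv_r' iN matrix_mul_assoc[symmetric])
  finally have N1: "N (Suc j) = transpose (R (Suc j)) ** (C ** R (Suc j)) - transpose b ** (matrix_inv (N j) ** b)" .
  have b2: "b = - (M j ** (matrix_inv (G j) ** G (Suc j)))"
    using zj assms unfolding b_def zinv_def by (simp add: CX T1t orthR)
  have bT: "transpose b = - (G (Suc j) ** (matrix_inv (G j) ** M j))"
    using G_inv_sym[OF jl] by (simp add: b2 tr_neg matrix_transpose_mul matrix_mul_assoc)
  show ?thesis unfolding N1 using assms
    by (simp add: bT b2 CX T2 mm_simps G_inv_sym[OF jl] G_def[of "Suc j", symmetric] GX)
qed

end

context bcgmu begin

abbreviation TM where "TM j \<equiv> ThetaMu mu A B X0 j"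
definition Dm where "Dm j = ThetaMu mu A B X0 j - bcgTheta A B X0 j"

definition yinv where "yinv j \<longleftrightarrow> spd (M j - N j) \<and> TM j = G j ** (matrix_inv (M j - N j) ** G j)"

lemma inv_scale: "invertible (X::real^'k^'k) \<Longrightarrow> c \<noteq> 0 \<Longrightarrow> matrix_inv (c *\<^sub>R X) = inverse c *\<^sub>R matrix_inv X"
  by (rule inv_unique) (simp add: mm_scale_l mm_scale_r inv_r)

lemma yinv0: assumes "0 < l" shows "yinv 0"
proof -
  have P0: "P 0 = R 0" by (simp add: bcg0)
  have "M 0 - N 0 = mu *\<^sub>R G 0"
    by (simp add: M_def N_def P0 C_def G_def mm_simps)
  moreover have "spd (mu *\<^sub>R G 0)" using G_spd assms mu_pos spd_scale by blast
  moreover have "TM 0 = G 0 ** (matrix_inv (mu *\<^sub>R G 0) ** G 0)"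
    using mu_pos iG[OF assms] by (simp add: ThetaMu_def G_def[symmetric] inv_scale mm_scale_l mm_scale_r inv_l)
  ultimately show ?thesis unfolding yinv_def by simp
qed

lemma D_props: assumes "j < l" "yinv j"
  shows "spd (Dm j)" and "matrix_inv (Dm j) = matrix_inv (G j) ** ((M j - N j + (M j - N j) ** matrix_inv (N j) ** (M j - N j)) ** matrix_inv (G j))"
proof -
  define Y where "Y = M j - N j"
  have Yspd: "spd Y" using assms(2) yinv_def Y_def by simp
  have Nspd: "spd (N j)" using N_spd zinv_all assms(1) by blast
  have Meq: "M j = Y + N j" by (simp add: Y_def)
  define W where "W = Y + Y ** matrix_inv (N j) ** Y"
  have rad: "matrix_inv W = matrix_inv Y - matrix_inv (M j)"
    unfolding W_def Meq by (rule radau(1)[OF Yspd Nspd])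
  have WW: "spd W" unfolding W_def by (rule radau(3)[OF Yspd Nspd])
  have Wspd: "spd (matrix_inv W)" using spd_inv[OF WW] .
  have iW: "invertible W" using spd_invertible[OF WW] .
  have De: "Dm j = G j ** (matrix_inv W ** G j)"
    using assms(2) unfolding Dm_def yinv_def Y_def[symmetric]
    by (simp add: Theta_eq rad mm_simps)
  have Ginj: "G j *v x = 0 \<Longrightarrow> x = 0" for x using G_spd assms(1) spd_inj by blast
  show "spd (Dm j)" using spd_congr[OF Wspd, of "G j"] Ginj by (simp add: De matrix_mul_assoc)
  have "Dm j ** (matrix_inv (G j) ** (W ** matrix_inv (G j))) = mat 1"
    using iG[OF assms(1)] iW by (simp add: De matrix_mul_assoc[symmetric] inv_r' inv_l' inv_r)
  hence "matrix_inv (Dm j) = matrix_inv (G j) ** (W ** matrix_inv (G j))" by (rule inv_unique)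
  thus "matrix_inv (Dm j) = matrix_inv (G j) ** ((M j - N j + (M j - N j) ** matrix_inv (N j) ** (M j - N j)) ** matrix_inv (G j))"
    by (simp add: W_def Y_def)
qed


lemma vec_num_mult: "(numeral w :: real^'a^'b) * X = (numeral w::real) *\<^sub>R X"
  by (simp add: vec_eq_iff)

lemma TM_Suc: "TM (Suc j) = G (Suc j) ** (matrix_inv (mu *\<^sub>R Dm j + G (Suc j)) ** Dm j)"
  by (simp add: ThetaMu_def UpsMuSuc Dm_def G_def Let_def)

lemma yinv_step: assumes "Suc j < l" "yinv j" shows "yinv (Suc j)"
proof -
  have jl: "j < l" using assms by simp
  define Y where "Y = M j - N j"
  define D where "D = Dm j"
  define G' where "G' = G (Suc j)"
  define S where "S = mu *\<^sub>R D + G'"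
  have Dspd: "spd D" using D_props(1)[OF jl assms(2)] D_def by simp
  have Dinv: "matrix_inv D = matrix_inv (G j) ** ((Y + Y ** matrix_inv (N j) ** Y) ** matrix_inv (G j))"
    using D_props(2)[OF jl assms(2)] by (simp add: D_def Y_def)
  have Meq: "M j = Y + N j" by (simp add: Y_def)
  have Nspd: "spd (N j)" using N_spd zinv_all jl by blast
  have iN: "invertible (N j)" using spd_invertible[OF Nspd] .
  have G'spd: "spd G'" using G_spd assms(1) G'_def by simp
  have iG': "invertible G'" using spd_invertible[OF G'spd] .
  have iD: "invertible D" using spd_invertible[OF Dspd] .
  have Sspd: "spd S" unfolding S_def by (rule spd_add[OF spd_scale[OF Dspd mu_pos] G'spd])
  have iS: "invertible S" using spd_invertible[OF Sspd] .
  have YE: "M (Suc j) - N (Suc j) = mu *\<^sub>R G' + G' ** (matrix_inv D ** G')"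
    unfolding N_Suc[OF assms(1)] Dinv G'_def
    by (simp add: Meq mm_simps inv_l' inv_l inv_r' iN vec_num_mult)
  have Y'spd: "spd (M (Suc j) - N (Suc j))"
  proof -
    have "psd (transpose G' ** matrix_inv D ** G')" by (rule psd_congr[OF spd_psd[OF spd_inv[OF Dspd]]])
    hence "psd (G' ** (matrix_inv D ** G'))" by (simp add: G'_def matrix_mul_assoc)
    thus ?thesis unfolding YE by (rule spd_add_psd[OF spd_scale[OF G'spd mu_pos]])
  qed
  have "(M (Suc j) - N (Suc j)) ** (matrix_inv G' ** (D ** matrix_inv S)) = S ** matrix_inv S"
    unfolding YE S_def using iG' iD by (simp add: mm_simps inv_l' inv_r')
  hence "matrix_inv (M (Suc j) - N (Suc j)) = matrix_inv G' ** (D ** matrix_inv S)"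
    using iS by (simp add: inv_r inv_unique)
  hence "G (Suc j) ** (matrix_inv (M (Suc j) - N (Suc j)) ** G (Suc j)) = D ** (matrix_inv S ** G')"
    using iG' by (simp add: G'_def[symmetric] matrix_mul_assoc[symmetric] inv_r')
  also have "\<dots> = G' ** (matrix_inv S ** D)"
  proof -
    have GS: "G' = S - mu *\<^sub>R D" by (simp add: S_def)
    show ?thesis unfolding GS using iS by (simp add: mm_simps inv_l' inv_r' inv_l inv_r)
  qed
  also have "\<dots> = TM (Suc j)" by (simp add: TM_Suc S_def D_def G'_def)
  finally show ?thesis unfolding yinv_def using Y'spd by simp
qed

lemma yinv_all: "j < l \<Longrightarrow> yinv j"
  by (induction j) (auto simp: yinv0 yinv_step)

lemma Dm_spd: "j < l \<Longrightarrow> spd (Dm j)" using D_props(1) yinv_all by blast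

end

lemma sym_dot: "transpose A = A \<Longrightarrow> (x::real^'n) \<bullet> (A *v y) = (A *v x) \<bullet> y"
  using dot_tr[of x A y] by simp

lemma eig_finite:
  assumes "spd (A::real^'n^'n)"
  shows "finite {l. \<exists>v. v \<noteq> 0 \<and> A *v v = l *\<^sub>R v}"
proof -
  let ?E = "{l. \<exists>v. v \<noteq> 0 \<and> A *v v = l *\<^sub>R v}"
  define ev where "ev l = (SOME v. v \<noteq> 0 \<and> A *v v = l *\<^sub>R v)" for l
  have ev: "ev l \<noteq> 0 \<and> A *v ev l = l *\<^sub>R ev l" if "l \<in> ?E" for l
  proof -
    from that have "\<exists>v. v \<noteq> 0 \<and> A *v v = l *\<^sub>R v" by simp
    thus ?thesis unfolding ev_def by (rule someI_ex)
  qed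
  have symA: "transpose A = A" using assms spd_sym by blast
  have inj: "inj_on ev ?E"
  proof (rule inj_onI)
    fix a b assume a: "a \<in> ?E" and b: "b \<in> ?E" and e: "ev a = ev b"
    have "a *\<^sub>R ev a = b *\<^sub>R ev a" using ev[OF a] ev[OF b] e by metis
    thus "a = b" using ev[OF a] by (simp add: scaleR_cancel_right)
  qed
  have orth: "pairwise orthogonal (ev ` ?E)"
    unfolding pairwise_def
  proof (intro ballI impI)
    fix x y assume x: "x \<in> ev ` ?E" and y: "y \<in> ev ` ?E" and xy: "x \<noteq> y"
    obtain a where a: "a \<in> ?E" "x = ev a" using x by blast
    obtain b where b: "b \<in> ?E" "y = ev b" using y by blast
    have ab: "a \<noteq> b" using xy a b by blast
    have "x \<bullet> (A *v y) = (A *v x) \<bullet> y" by (rule sym_dot[OF symA])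
    hence "b * (x \<bullet> y) = a * (x \<bullet> y)" using ev[OF a(1)] ev[OF b(1)] a(2) b(2) by simp
    hence "x \<bullet> y = 0" using ab by simp
    thus "orthogonal x y" by (simp add: orthogonal_def)
  qed
  have "0 \<notin> ev ` ?E" using ev by fastforce
  hence "independent (ev ` ?E)" using pairwise_orthogonal_independent orth by blast
  hence "finite (ev ` ?E)" using independent_imp_finite by blast
  thus ?thesis using finite_imageD inj by blast
qed

lemma spd_shift:
  assumes A: "spd (A::real^'n^'n)" and mu: "mu < lambda_min A"
  shows "spd (A - mu *\<^sub>R mat 1)"
proof (rule ccontr)
  have symA: "transpose A = A" using A spd_sym by blast
  have sym: "transpose (A - mu *\<^sub>R mat 1) = A - mu *\<^sub>R mat 1"
    by (simp add: tr_diff transpose_scalar symA)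
  assume "\<not> spd (A - mu *\<^sub>R mat 1)"
  then obtain x where x: "x \<noteq> 0" "x \<bullet> ((A - mu *\<^sub>R mat 1) *v x) \<le> 0"
    using sym unfolding spd_def by force
  have x2: "x \<bullet> (A *v x) \<le> mu * (x \<bullet> x)"
    using x(2) by (simp add: matrix_vector_mult_diff_rdistrib inner_diff_right scaleR_matrix_vector_assoc[symmetric])
  define f where "f v = v \<bullet> (A *v v)" for v :: "real^'n"
  have cf: "continuous_on (sphere 0 1) f" unfolding f_def
    by (intro continuous_intros continuous_on_compose2[OF _ continuous_on_id]) (auto intro: linear_continuous_on bounded_linear_intros)
  have ne: "sphere (0::real^'n) 1 \<noteq> {}"
    using x(1) by (metis dist_0_norm norm_sgn mem_sphere empty_iff)
  obtain v where v: "v \<in> sphere 0 1" "\<forall>y\<in>sphere 0 1. f v \<le> f y"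
    using continuous_attains_inf[OF compact_sphere ne cf] by blast
  define lam where "lam = f v"
  have scale: "f (c *\<^sub>R w) = c^2 * f w" for c w
    by (simp add: f_def matrix_vector_mult_scaleR power2_eq_square)
  have lb: "lam * (w \<bullet> w) \<le> f w" for w
  proof (cases "w = 0")
    case True thus ?thesis by (simp add: f_def)
  next
    case False
    have "norm (inverse (norm w) *\<^sub>R w) = 1" using False by simp
    hence "lam \<le> f (inverse (norm w) *\<^sub>R w)" using v lam_def by simp
    also have "\<dots> = f w / (norm w)^2" by (simp add: scale power_inverse divide_inverse mult.commute)
    finally show ?thesis using False by (simp add: power2_norm_eq_inner[symmetric] pos_le_divide_eq)
  qed
  have vv: "v \<bullet> v = 1" using v(1) by (simp add: inner_commute norm_eq_1)
  define u where "u = A *v v - lam *\<^sub>R v"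
  have quad: "0 \<le> 2 * t * (u \<bullet> u) + t^2 * (f u - lam * (u \<bullet> u))" for t
  proof -
    have l1: "lam * ((v + t *\<^sub>R u) \<bullet> (v + t *\<^sub>R u)) \<le> f (v + t *\<^sub>R u)" by (rule lb)
    have vAu: "v \<bullet> (A *v u) = u \<bullet> (A *v v)"
      using sym_dot[OF symA, of v u] by (simp add: inner_commute)
    have e1: "f (v + t *\<^sub>R u) = f v + 2 * t * (u \<bullet> (A *v v)) + t^2 * f u"
      unfolding f_def by (simp add: algebra_simps inner_commute power2_eq_square vAu)
    have e2: "(v + t *\<^sub>R u) \<bullet> (v + t *\<^sub>R u) = v \<bullet> v + 2 * t * (u \<bullet> v) + t^2 * (u \<bullet> u)"
      by (simp add: algebra_simps inner_commute power2_eq_square)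
    have e3: "u \<bullet> (A *v v) = u \<bullet> u + lam * (u \<bullet> v)"
      by (simp add: u_def algebra_simps inner_commute)
    have E: "f (v + t *\<^sub>R u) - lam * ((v + t *\<^sub>R u) \<bullet> (v + t *\<^sub>R u)) = 2 * t * (u \<bullet> u) + t^2 * (f u - lam * (u \<bullet> u))"
      unfolding e1 e2 e3 vv lam_def[symmetric] by (simp add: algebra_simps)
    show ?thesis using l1 E by linarith
  qed
  have c0: "0 \<le> f u - lam * (u \<bullet> u)" using lb[of u] by simp
  have u0: "u = 0"
  proof (rule ccontr)
    assume "u \<noteq> 0"
    hence p: "u \<bullet> u > 0" by simp
    define c where "c = f u - lam * (u \<bullet> u)"
    define t where "t = - (u \<bullet> u) / (c + 1)"
    have cp: "c + 1 > 0" using c0 c_def by simp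
    have tn: "t < 0" using p cp t_def by (simp add: divide_neg_pos)
    have "t * c \<ge> - (u \<bullet> u)"
    proof -
      have "t * c = - (u \<bullet> u) * (c / (c + 1))" by (simp add: t_def)
      moreover have "c / (c + 1) \<le> 1" using cp c0 c_def by simp
      moreover have "(u \<bullet> u) * (c / (c + 1)) \<le> (u \<bullet> u) * 1"
        by (rule mult_left_mono) (use \<open>c / (c + 1) \<le> 1\<close> p in auto)
      ultimately show ?thesis by simp
    qed
    hence "2 * (u \<bullet> u) + t * c > 0" using p by linarith
    hence "t * (2 * (u \<bullet> u) + t * c) < 0" using tn by (simp add: mult_neg_pos)
    moreover have "t * (2 * (u \<bullet> u) + t * c) = 2 * t * (u \<bullet> u) + t^2 * c" by (simp add: algebra_simps power2_eq_square)
    ultimately show False using quad[of t] c_def by simp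
  qed
  have v0: "v \<noteq> 0" using v(1) by auto
  have eig: "lam \<in> {l. \<exists>v. v \<noteq> 0 \<and> A *v v = l *\<^sub>R v}" using u0 v0 u_def by auto
  have "lambda_min A \<le> lam" unfolding lambda_min_def using eig eig_finite[OF A] by (simp add: Min_le)
  moreover have "lam * (x \<bullet> x) \<le> mu * (x \<bullet> x)" using lb[of x] x2 f_def by simp
  hence "lam \<le> mu" using x(1) by simp
  ultimately show False using mu by simp
qed

context bcgmu begin

abbreviation Er where "Er k \<equiv> bcgErr A B X0 k"

lemma BMu_spd: assumes "1 \<le> k" "k \<le> l" shows "spd (BMu mu A B X0 k)"
proof -
  obtain i where k: "k = Suc i" using assms by (cases k) auto
  have il: "i < l" using assms k by simp
  define D where "D = Dm i"
  define S where "S = mu *\<^sub>R D + G k"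
  have Dspd: "spd D" using Dm_spd[OF il] D_def by simp
  have Sspd: "spd S" unfolding S_def by (rule spd_add_psd[OF spd_scale[OF Dspd mu_pos] G_psd])
  have iS: "invertible S" using spd_invertible[OF Sspd] .
  have GS: "G k = S - mu *\<^sub>R D" by (simp add: S_def)
  have "BMu mu A B X0 k = D - G k ** (matrix_inv S ** D)"
    by (simp add: BMu_def k TM_Suc D_def S_def Dm_def)
  also have "\<dots> = mu *\<^sub>R (transpose D ** matrix_inv S ** D)"
    unfolding GS using iS spd_sym[OF Dspd] by (simp add: mm_simps inv_r')
  finally have BE: "BMu mu A B X0 k = mu *\<^sub>R (transpose D ** matrix_inv S ** D)" .
  have "spd (transpose D ** matrix_inv S ** D)"
    by (rule spd_congr[OF spd_inv[OF Sspd]]) (rule spd_inj[OF Dspd])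
  thus ?thesis unfolding BE by (rule spd_scale[OF _ mu_pos])
qed

lemma inv2: assumes "1 \<le> j" "j \<le> l"
  shows "invertible (mu *\<^sub>R (TM (j - 1) - bcgTheta A B X0 (j - 1)) + transpose (R j) ** R j)"
proof -
  have "j - 1 < l" using assms by simp
  hence "spd (mu *\<^sub>R Dm (j - 1) + G j)"
    by (intro spd_add_psd[OF spd_scale[OF Dm_spd mu_pos] G_psd])
  thus ?thesis using spd_invertible by (simp add: Dm_def G_def)
qed

lemma step_eq: assumes "1 \<le> k" "k \<le> l"
  shows "TM (k - 1) - Er (k - 1) = BMu mu A B X0 k + (TM k - Er k)"
proof -
  obtain i where k: "k = Suc i" using assms by (cases k) auto
  have il: "i < l" using assms k by simp
  show ?thesis using Err_step[OF il] by (simp add: k BMu_def algebra_simps)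
qed

lemma tele: assumes "1 \<le> k" "k \<le> l"
  shows "TM (k - 1) - Er (k - 1) = (\<Sum>j = k..l. BMu mu A B X0 j) + (TM l - Er l)"
  using assms(2,1)
proof (induction k rule: inc_induct)
  case base
  thus ?case using step_eq[of l] by simp
next
  case (step n)
  have "TM (n - 1) - Er (n - 1) = BMu mu A B X0 n + (TM n - Er n)" using step_eq step by simp
  also have "TM n - Er n = (\<Sum>j = Suc n..l. BMu mu A B X0 j) + (TM l - Er l)"
    using step.IH by simp
  finally show ?case using step by (simp add: sum.atLeast_Suc_atMost add.assoc)
qed

lemma final5: assumes "R l = 0" "1 \<le> k" "k \<le> l" shows "spd (TM (k - 1) - Er (k - 1))"
  using assms(3,2)
proof (induction k rule: inc_induct)
  case base
  have "Er l = 0" by (simp add: Err_eq assms(1) tr_zero)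
  moreover have "TM l = 0" by (simp add: ThetaMu_def assms(1) tr_zero)
  ultimately show ?case using step_eq[of l] BMu_spd[of l] base by simp
next
  case (step n)
  thus ?case using step_eq[of n] BMu_spd[of n] spd_add by simp
qed

end

theorem theorem7:
  fixes A :: "real^'n^'n" and B X0 :: "real^'m^'n" and mu :: real and l :: nat
  assumes "spd A"
    and "0 < mu" and "mu < lambda_min A"
    and "l \<ge> 1"
    and "\<forall>k < l. rank (bcgR A B X0 k) = CARD('m)"
  shows "(\<forall>k < l. invertible (transpose (bcgP A B X0 k) ** A ** bcgP A B X0 k))
       \<and> (\<forall>j \<in> {1..l}. invertible
             (mu *\<^sub>R (ThetaMu mu A B X0 (j - 1) - bcgTheta A B X0 (j - 1))
               + transpose (bcgR A B X0 j) ** bcgR A B X0 j))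
       \<and> (\<forall>k \<in> {1..l}. ThetaMu mu A B X0 (k - 1) - bcgErr A B X0 (k - 1)
             = (\<Sum>j = k..l. BMu mu A B X0 j) + (ThetaMu mu A B X0 l - bcgErr A B X0 l))
       \<and> (\<forall>j \<in> {1..l}. spd (BMu mu A B X0 j))
       \<and> (bcgR A B X0 l = 0 \<longrightarrow>
            (\<forall>k \<in> {1..l}. spd (ThetaMu mu A B X0 (k - 1) - bcgErr A B X0 (k - 1))))"
proof -
  have fr: "bcgR A B X0 k *v x = 0 \<Longrightarrow> x = 0" if "k < l" for k x
  proof -
    assume h: "bcgR A B X0 k *v x = 0"
    have "inj ((*v) (bcgR A B X0 k))" using assms(5) that full_rank_injective by blast
    thus "x = 0" using h by (metis injD matrix_vector_mult_0_right)
  qed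
  interpret I: bcgmu A B X0 l mu
    by unfold_locales (use assms fr spd_shift in auto)
  show ?thesis
    using I.iM I.M_def I.inv2 I.tele I.BMu_spd I.final5 by auto
qed

end
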